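(* Let $n\geq 2$ and $k\in\{0,\ldots,n-1\}$ be integers, and define $$\varphi_{n,k}(x)=\sum_{i=0}^{n-1}\frac{1}{1-\frac{i}{n-1}x}-\sum_{i=0}^{n-k-1}\frac{1}{1-x-\frac{i}{n-1}x},\qquad x\in\left[0,\frac{n-1}{2n-k-2}\right).$$ Then there exists $x_{n,k}\in\left[\frac{k-1}{n-1},\frac{k}{n-1}\right]$ such that $\varphi_{n,k}$ is positive on $[0,x_{n,k})$ and negative on $\left(x_{n,k},\frac{n-1}{2n-k-2}\right)$. *)

theory Defs
  imports Complex_Main
begin

definition phi :: "nat \<Rightarrow> nat \<Rightarrow> real \<Rightarrow> real" where
  "phi n k x =
     (\<Sum>i=0..n-1. 1 / (1 - (real i / (real n - 1)) * x))
   - (\<Sum>i=0..n-k-1. 1 / (1 - x - (real i / (real n - 1)) * x))"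

end

theory Submission
  imports Defs
begin

lemma lnh1: "(t::real) > 0 \<Longrightarrow> 1/(t+1) \<le> ln (t+1) - ln t"
proof -
  assume t: "t > 0"
  have "ln (t/(t+1)) \<le> t/(t+1) - 1" using t by (intro ln_le_minus_one) auto
  moreover have "ln (t/(t+1)) = ln t - ln (t+1)" using t by (simp add: ln_div)
  moreover have "t/(t+1) - 1 = - 1/(t+1)" using t by (simp add: field_simps)
  ultimately show ?thesis by linarith
qed

lemma lnh2: "(t::real) > 0 \<Longrightarrow> ln (t+1) - ln t \<le> 1/t"
proof -
  assume t: "t > 0"
  have "ln ((t+1)/t) \<le> (t+1)/t - 1" using t by (intro ln_le_minus_one) auto
  moreover have "ln ((t+1)/t) = ln (t+1) - ln t" using t by (simp add: ln_div)
  moreover have "(t+1)/t - 1 = 1/t" using t by (simp add: field_simps)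
  ultimately show ?thesis by linarith
qed

lemma sumA: "(r::real) > 0 \<Longrightarrow> (\<Sum>a=0..N. 1/(r + real a)) \<le> 1/r + ln (r + real N) - ln r"
proof (induction N)
  case 0 then show ?case by simp
next
  case (Suc N)
  have "1/(r + real N + 1) \<le> ln (r + real N + 1) - ln (r + real N)"
    using lnh1[of "r + real N"] Suc.prems by simp
  moreover have "(\<Sum>a=0..Suc N. 1/(r + real a)) = (\<Sum>a=0..N. 1/(r+real a)) + 1/(r + real N + 1)" by (simp add: add.assoc)
  moreover have "ln (r + real (Suc N)) = ln (r + real N + 1)" by (simp add: algebra_simps)
  ultimately show ?case using Suc by linarith
qed

lemma sumB: "(r::real) > 0 \<Longrightarrow> (\<Sum>a=0..N. 1/(r + real a)) \<ge> 1/r + ln (r + real N + 1) - ln (r + 1)"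
proof (induction N)
  case 0 then show ?case by simp
next
  case (Suc N)
  have "1/(r + real N + 1) \<ge> ln (r + real N + 1 + 1) - ln (r + real N + 1)"
    using lnh2[of "r + real N + 1"] Suc.prems by simp
  moreover have "(\<Sum>a=0..Suc N. 1/(r + real a)) = (\<Sum>a=0..N. 1/(r+real a)) + 1/(r + real N + 1)" by (simp add: add.assoc)
  moreover have "ln (r + real (Suc N) + 1) = ln (r + real N + 1 + 1)" by (simp add: algebra_simps)
  ultimately show ?case using Suc by linarith
qed

lemma sumC: "real M < (r::real) \<Longrightarrow> (\<Sum>b=0..M. 1/(r - real b)) \<ge> 1/r + ln r - ln (r - real M)"
proof (induction M)
  case 0 then show ?case by simp
next
  case (Suc M)
  have "1/(r - real M - 1) \<ge> ln (r - real M - 1 + 1) - ln (r - real M - 1)"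
    using lnh2[of "r - real M - 1"] Suc.prems by simp
  moreover have "(\<Sum>b=0..Suc M. 1/(r - real b)) = (\<Sum>b=0..M. 1/(r - real b)) + 1/(r - real M - 1)" by (simp add: algebra_simps)
  moreover have "ln (r - real (Suc M)) = ln (r - real M - 1)" by (simp add: algebra_simps)
  moreover have "ln (r - real M - 1 + 1) = ln (r - real M)" by simp
  ultimately show ?case using Suc by linarith
qed

lemma sumD: "real M + 1 < (r::real) \<Longrightarrow> (\<Sum>b=0..M. 1/(r - real b)) \<le> 1/r + ln (r - 1) - ln (r - 1 - real M)"
proof (induction M)
  case 0 then show ?case by simp
next
  case (Suc M)
  have "1/(r - real M - 2 + 1) \<le> ln (r - real M - 2 + 1) - ln (r - real M - 2)"
    using lnh1[of "r - real M - 2"] Suc.prems by simp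
  moreover have "(\<Sum>b=0..Suc M. 1/(r - real b)) = (\<Sum>b=0..M. 1/(r - real b)) + 1/(r - real M - 2 + 1)" by (simp add: algebra_simps)
  moreover have "ln (r - 1 - real (Suc M)) = ln (r - real M - 2)" by (simp add: algebra_simps)
  moreover have "ln (r - real M - 2 + 1) = ln (r - 1 - real M)" by (simp add: algebra_simps)
  ultimately show ?case using Suc by linarith
qed


definition P :: "nat \<Rightarrow> nat \<Rightarrow> real \<Rightarrow> real" where
  "P m k x = (\<Sum>i=0..m. 1 / (1 - (real i / real m) * x))
   - (\<Sum>i=0..m-k. 1 / (1 - x - (real i / real m) * x))"

lemma phi_eq: "phi (Suc m) k x = P m k x"
  unfolding phi_def P_def by simp

lemma Blt1: "m \<ge> 1 \<Longrightarrow> k \<le> m \<Longrightarrow> y < real m / (2*real m - real k) \<Longrightarrow> y \<le> 1"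
proof -
  assume a: "m \<ge> 1" "k \<le> m" "y < real m / (2*real m - real k)"
  have pos: "2*real m - real k > 0" using a by simp
  have "real m / (2*real m - real k) \<le> 1" using pos a by (simp add: divide_simps)
  then show ?thesis using a by linarith
qed

lemma den1: "m \<ge> 1 \<Longrightarrow> i \<le> m \<Longrightarrow> 0 \<le> y \<Longrightarrow> y < 1 \<Longrightarrow> 1 - real i / real m * y > 0"
proof -
  assume a: "m \<ge> 1" "i \<le> m" "0 \<le> y" "y < 1"
  have "real i / real m \<le> 1" using a by (simp add: divide_simps)
  moreover have "real i / real m \<ge> 0" by simp
  ultimately have "real i / real m * y \<le> 1 * y" using a by (intro mult_right_mono) auto
  then show ?thesis using a by linarith
qed

lemma den2: "m \<ge> 1 \<Longrightarrow> k \<le> m \<Longrightarrow> i \<le> m - k \<Longrightarrow> 0 \<le> y \<Longrightarrow> y < real m / (2*real m - real k)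
   \<Longrightarrow> 1 - y - real i / real m * y > 0"
proof -
  assume a: "m \<ge> 1" "k \<le> m" "i \<le> m - k" "0 \<le> y" "y < real m / (2*real m - real k)"
  have pos: "2*real m - real k > 0" using a by simp
  have y: "y * (2*real m - real k) < real m" using a pos by (simp add: divide_simps)
  have "real i \<le> real m - real k" using a by linarith
  then have "real i * y \<le> (real m - real k) * y" using a by (simp add: mult_right_mono)
  then have "real m * y + real i * y < real m" using y by (simp add: algebra_simps)
  then have "(real m * y + real i * y) / real m < 1" using a by (simp add: divide_simps)
  moreover have "(real m * y + real i * y) / real m = y + real i / real m * y" using a by (simp add: field_simps)
  ultimately show ?thesis by linarith
qed

lemma t1: "0 \<le> (a::real) \<Longrightarrow> a \<le> 1 \<Longrightarrow> 0 \<le> x \<Longrightarrow> x < z \<Longrightarrow> z < 1 \<Longrightarrow> (1-z)/(1-a*z) \<le> (1-x)/(1-a*x)"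
proof -
  assume h: "0 \<le> a" "a \<le> 1" "0 \<le> x" "x < z" "z < 1"
  have p1: "1 - a*z > 0" using h by (smt (verit) mult_left_le_one_le)
  have p2: "1 - a*x > 0" using h by (smt (verit) mult_left_le_one_le)
  have "(1-x)*(1-a*z) - (1-z)*(1-a*x) = (z-x)*(1-a)" by algebra
  moreover have "(z-x)*(1-a) \<ge> 0" using h by simp
  ultimately have "(1-z)*(1-a*x) \<le> (1-x)*(1-a*z)" by linarith
  then show ?thesis using p1 p2 by (simp add: divide_simps)
qed

lemma t2: "0 \<le> (a::real) \<Longrightarrow> x < z \<Longrightarrow> 1 - x - a*x > 0 \<Longrightarrow> 1 - z - a*z > 0 \<Longrightarrow> (1-x)/(1-x-a*x) \<le> (1-z)/(1-z-a*z)"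
proof -
  assume h: "0 \<le> a" "x < z" "1 - x - a*x > 0" "1 - z - a*z > 0"
  have "(1-z)*(1-x-a*x) - (1-x)*(1-z-a*z) = a*(z-x)" by algebra
  moreover have "a*(z-x) \<ge> 0" using h by simp
  ultimately have "(1-x)*(1-z-a*z) \<le> (1-z)*(1-x-a*x)" by linarith
  then show ?thesis using h by (simp add: divide_simps)
qed

lemma Pmul: "(1-y) * P m k y = (\<Sum>i=0..m. (1-y) / (1 - (real i / real m) * y))
   - (\<Sum>i=0..m-k. (1-y) / (1 - y - (real i / real m) * y))"
  unfolding P_def by (simp add: right_diff_distrib sum_distrib_left)

lemma Pmono:
  assumes "m \<ge> 1" "k \<le> m" "0 \<le> x" "x < z" "z < real m / (2*real m - real k)"
  shows "(1-z) * P m k z < (1-x) * P m k x"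
proof -
  have z1: "z \<le> 1" using Blt1 assms by blast
  have zz: "z < 1"
  proof -
    have "real m / (2*real m - real k) \<le> 1" using assms by (simp add: divide_simps)
    then show ?thesis using assms by linarith
  qed
  have A: "(\<Sum>i=0..m. (1-z) / (1 - (real i / real m) * z)) < (\<Sum>i=0..m. (1-x) / (1 - (real i / real m) * x))"
  proof (rule sum_strict_mono_ex1)
    show "finite {0..m}" by simp
    show "\<forall>i\<in>{0..m}. (1-z) / (1 - (real i / real m) * z) \<le> (1-x) / (1 - (real i / real m) * x)"
    proof
      fix i assume i: "i \<in> {0..m}"
      have "real i / real m \<le> 1" using i assms by (simp add: divide_simps)
      then show "(1-z) / (1 - (real i / real m) * z) \<le> (1-x) / (1 - (real i / real m) * x)"
        using t1[of "real i / real m" x z] assms zz by simp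
    qed
    show "\<exists>i\<in>{0..m}. (1-z) / (1 - (real i / real m) * z) < (1-x) / (1 - (real i / real m) * x)"
      using assms by (intro bexI[of _ 0]) auto
  qed
  have xB: "x < real m / (2*real m - real k)" using assms by linarith
  have B: "(\<Sum>i=0..m-k. (1-x) / (1 - x - (real i / real m) * x)) \<le> (\<Sum>i=0..m-k. (1-z) / (1 - z - (real i / real m) * z))"
  proof (rule sum_mono)
    fix i assume i: "i \<in> {0..m-k}"
    show "(1-x) / (1 - x - (real i / real m) * x) \<le> (1-z) / (1 - z - (real i / real m) * z)"
      using t2[of "real i / real m" x z] den2[of m k i x] den2[of m k i z] assms xB i by simp
  qed
  show ?thesis using A B unfolding Pmul by linarith
qed


lemma Pform:
  assumes m: "m \<ge> 1" and c: "1 \<le> c" "c < m" and k: "k \<le> m"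
    and r: "r = real m * (real m - real c) / real c"
    and pos2: "\<And>i. i \<le> m - k \<Longrightarrow> r - real i > 0"
  shows "P m k (real c / real m) = (real m ^ 2 / real c) *
     ((\<Sum>a=0..m. 1/(r + real a)) - (\<Sum>i=0..m-k. 1/(r - real i)))"
proof -
  have rpos: "r > 0" using r m c by simp
  have e1: "1 / (1 - real i / real m * (real c / real m)) = (real m ^ 2 / real c) * (1/(r + real (m - i)))"
    if i: "i \<le> m" for i
  proof -
    have "real c * real i \<le> real c * real m" using i by (intro mult_left_mono) auto
    moreover have "real c * real m < real m * real m" using c m by simp
    ultimately have q: "real m * real m - real c * real i > 0" by linarith
    have "r + real (m - i) = (real m * real m - real c * real i) / real c"
      using r i c by (simp add: of_nat_diff field_simps)
    then show ?thesis using q c m by (simp add: field_simps power2_eq_square)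
  qed
  have e2: "1 / (1 - real c / real m - real i / real m * (real c / real m)) = (real m ^ 2 / real c) * (1/(r - real i))"
    if i: "i \<le> m - k" for i
  proof -
    have q: "r - real i > 0" using pos2 i by blast
    have eq: "(r - real i) * real c = real m * real m - real c * real m - real c * real i"
      using r c by (simp add: field_simps)
    have "(r - real i) * real c > 0" using q c by simp
    then have q2: "real m * real m - real c * real m - real c * real i > 0" using eq by linarith
    have "r - real i = (real m * real m - real c * real m - real c * real i) / real c"
      using eq c by (simp add: field_simps)
    note re = this
    have d: "1 - real c / real m - real i / real m * (real c / real m) = (real m * real m - real c * real m - real c * real i) / (real m * real m)"
      using m by (simp add: field_simps)
    show ?thesis unfolding d re using q2 c m by (simp add: power2_eq_square)
  qed
  have S1: "(\<Sum>i=0..m. 1 / (1 - real i / real m * (real c / real m))) = (real m ^ 2 / real c) * (\<Sum>a=0..m. 1/(r + real a))"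
  proof -
    have "(\<Sum>i=0..m. 1 / (1 - real i / real m * (real c / real m))) = (\<Sum>i=0..m. (real m ^ 2 / real c) * (1/(r + real (m - i))))"
      using e1 by (intro sum.cong) auto
    also have "\<dots> = (real m ^ 2 / real c) * (\<Sum>i=0..m. 1/(r + real (m - i)))" by (simp add: sum_distrib_left)
    also have "(\<Sum>i=0..m. 1/(r + real (m - i))) = (\<Sum>a=0..m. 1/(r + real a))"
      using sum.atLeastAtMost_rev[of "\<lambda>a. 1/(r + real a)" 0 m] by simp
    finally show ?thesis .
  qed
  have S2: "(\<Sum>i=0..m-k. 1 / (1 - real c / real m - real i / real m * (real c / real m))) = (real m ^ 2 / real c) * (\<Sum>i=0..m-k. 1/(r - real i))"
  proof -
    have "(\<Sum>i=0..m-k. 1 / (1 - real c / real m - real i / real m * (real c / real m))) = (\<Sum>i=0..m-k. (real m ^ 2 / real c) * (1/(r - real i)))"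
      using e2 by (intro sum.cong) auto
    also have "\<dots> = (real m ^ 2 / real c) * (\<Sum>i=0..m-k. 1/(r - real i))" by (simp add: sum_distrib_left)
    finally show ?thesis .
  qed
  show ?thesis unfolding P_def S1 S2 by (simp add: right_diff_distrib)
qed

lemma valB:
  assumes "1 \<le> k" "k < m"
  shows "P m k (real k / real m) \<le> 0"
proof -
  have m: "m \<ge> 1" using assms by simp
  define r where "r = real m * (real m - real k) / real k"
  have rpos: "r > 0" using assms by (simp add: r_def)
  have key: "r - (real m - real k) = (real m - real k)^2 / real k"
    using assms by (simp add: r_def field_simps power2_eq_square)
  have gap: "r - (real m - real k) > 0" unfolding key using assms by simp
  have pos2: "r - real i > 0" if "i \<le> m - k" for i
  proof -
    have "real i \<le> real m - real k" using that assms by linarith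
    then show ?thesis using gap by linarith
  qed
  have F: "P m k (real k / real m) = (real m ^ 2 / real k) *
     ((\<Sum>a=0..m. 1/(r + real a)) - (\<Sum>i=0..m-k. 1/(r - real i)))"
    by (rule Pform[OF m assms(1,2) _ r_def pos2]) (use assms in auto)
  have mk: "real (m - k) = real m - real k" using assms by simp
  have A: "(\<Sum>a=0..m. 1/(r + real a)) \<le> 1/r + ln (r + real m) - ln r" using sumA rpos by blast
  have C: "(\<Sum>i=0..m-k. 1/(r - real i)) \<ge> 1/r + ln r - ln (r - real (m-k))"
    using sumC[of "m-k" r] gap mk by simp
  have prod: "(r + real m) * (r - (real m - real k)) = r * r"
    using assms by (simp add: r_def field_simps)
  have "ln (r + real m) + ln (r - (real m - real k)) = ln r + ln r"
  proof -
    have "r + real m > 0" using rpos by simp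
    then have "ln ((r + real m) * (r - (real m - real k))) = ln (r + real m) + ln (r - (real m - real k))"
      using gap by (simp add: ln_mult)
    moreover have "ln (r * r) = ln r + ln r" using rpos by (simp add: ln_mult)
    ultimately show ?thesis using prod by simp
  qed
  then have "(\<Sum>a=0..m. 1/(r + real a)) - (\<Sum>i=0..m-k. 1/(r - real i)) \<le> 0"
    using A C mk by simp
  moreover have "real m ^ 2 / real k \<ge> 0" by simp
  ultimately show ?thesis unfolding F by (rule mult_nonneg_nonpos[rotated])
qed

lemma valA:
  assumes "1 \<le> c" "c + 1 = k" "k \<le> m"
  shows "P m k (real c / real m) \<ge> 0"
proof -
  have m: "m \<ge> 1" "c < m" using assms by auto
  define r where "r = real m * (real m - real c) / real c"
  have rpos: "r > 0" using assms by (simp add: r_def)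
  have key: "r - (real m - real c) = (real m - real c)^2 / real c"
    using assms by (simp add: r_def field_simps power2_eq_square)
  have gap: "r - (real m - real c) > 0" unfolding key using assms by simp
  have mk: "real (m - k) = real m - real c - 1" using assms by auto
  have pos2: "r - real i > 0" if "i \<le> m - k" for i
  proof -
    have "real i \<le> real m - real c" using that assms by linarith
    then show ?thesis using gap by linarith
  qed
  have F: "P m k (real c / real m) = (real m ^ 2 / real c) *
     ((\<Sum>a=0..m. 1/(r + real a)) - (\<Sum>i=0..m-k. 1/(r - real i)))"
    by (rule Pform[OF m(1) assms(1) m(2) assms(3) r_def pos2])
  have B: "(\<Sum>a=0..m. 1/(r + real a)) \<ge> 1/r + ln (r + real m + 1) - ln (r + 1)" using sumB rpos by blast
  have D: "(\<Sum>i=0..m-k. 1/(r - real i)) \<le> 1/r + ln (r - 1) - ln (r - 1 - real (m-k))"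
    using sumD[of "m-k" r] gap mk by simp
  have prod: "(r + real m + 1) * (r - (real m - real c)) = r * r + (r - (real m - real c))"
    using assms by (simp add: r_def field_simps)
  have r1: "r - 1 > 0" using gap m by linarith
  have "(r - 1) * (r + 1) < (r + real m + 1) * (r - (real m - real c))"
    unfolding prod using gap by (simp add: algebra_simps)
  then have "ln ((r - 1) * (r + 1)) < ln ((r + real m + 1) * (r - (real m - real c)))"
    using r1 rpos gap by (subst ln_less_cancel_iff) auto
  then have "ln (r - 1) + ln (r + 1) < ln (r + real m + 1) + ln (r - (real m - real c))"
    using r1 rpos gap by (simp add: ln_mult)
  then have "(\<Sum>a=0..m. 1/(r + real a)) - (\<Sum>i=0..m-k. 1/(r - real i)) \<ge> 0"
    using B D mk by (simp add: algebra_simps)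
  moreover have "real m ^ 2 / real c \<ge> 0" by simp
  ultimately show ?thesis unfolding F by (rule mult_nonneg_nonneg[rotated])
qed


lemma Pcont:
  assumes "m \<ge> 1" "k \<le> m" "S \<subseteq> {0..<real m / (2*real m - real k)}"
  shows "continuous_on S (P m k)"
proof -
  have d1: "1 - real i / real m * y \<noteq> 0" if "y \<in> S" "i \<le> m" for y i
  proof -
    have "0 \<le> y" "y < real m / (2*real m - real k)" using that assms by auto
    moreover have "real m / (2*real m - real k) \<le> 1" using assms by (simp add: divide_simps)
    ultimately have "y < 1" by linarith
    then show ?thesis using den1[of m i y] assms that \<open>0 \<le> y\<close> by simp
  qed
  have d2: "1 - y - real i / real m * y \<noteq> 0" if "y \<in> S" "i \<le> m - k" for y i
    using den2[of m k i y] assms that by auto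
  show ?thesis unfolding P_def[abs_def]
    by (intro continuous_intros) (use d1 d2 in auto)
qed

lemma Pm_pos:
  assumes "m \<ge> 1" "0 \<le> y" "y < 1"
  shows "P m m y > 0"
proof -
  obtain m' where m': "m = Suc m'" using assms by (cases m) auto
  have last: "1 / (1 - real m / real m * y) = 1/(1-y)" using assms by simp
  have "(\<Sum>i=0..m'. 1 / (1 - (real i / real m) * y)) > 0"
  proof (rule sum_pos)
    fix i assume "i \<in> {0..m'}"
    then have "i \<le> m" using m' by simp
    then show "1 / (1 - (real i / real m) * y) > 0" using den1[of m i y] assms by simp
  qed auto
  moreover have "P m m y = (\<Sum>i=0..m'. 1 / (1 - (real i / real m) * y))"
    unfolding P_def using last by (simp add: m')
  ultimately show ?thesis by simp
qed

theorem lemma2p3: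
  fixes n k :: nat
  assumes "n \<ge> 2" and "k \<le> n - 1"
  shows "\<exists>x0::real.
           (real k - 1) / (real n - 1) \<le> x0 \<and> x0 \<le> real k / (real n - 1) \<and>
           (\<forall>x. 0 \<le> x \<and> x < x0 \<longrightarrow> phi n k x > 0) \<and>
           (\<forall>x. x0 < x \<and> x < (real n - 1) / (2 * real n - real k - 2) \<longrightarrow> phi n k x < 0)"
proof -
  obtain m where n: "n = Suc m" using assms by (cases n) auto
  have m: "m \<ge> 1" "k \<le> m" using assms n by auto
  have rn: "real n - 1 = real m" using n by simp
  have rB: "2 * real n - real k - 2 = 2 * real m - real k" using n by simp
  have ph: "phi n k = P m k" using n phi_eq by auto
  define B where "B = real m / (2 * real m - real k)"
  have "\<exists>x0::real.
           (real k - 1) / real m \<le> x0 \<and> x0 \<le> real k / real m \<and>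
           (\<forall>x. 0 \<le> x \<and> x < x0 \<longrightarrow> P m k x > 0) \<and>
           (\<forall>x. x0 < x \<and> x < B \<longrightarrow> P m k x < 0)"
  proof (cases "k = m")
    case True
    have B1: "B = 1" using True m by (simp add: B_def)
    show ?thesis
      apply (rule exI[of _ 1])
      using True m Pm_pos[of m] unfolding B1 by (auto simp: divide_simps)
  next
    case False
    then have km: "k < m" using m by simp
    have hiB: "real k / real m < B"
    proof -
      have "real k * (2 * real m - real k) < real m * real m"
      proof -
        have "real m * real m - real k * (2 * real m - real k) = (real m - real k)^2"
          by (simp add: power2_eq_square algebra_simps)
        moreover have "(real m - real k)^2 > 0" using km by simp
        ultimately show ?thesis by linarith
      qed
      moreover have "2 * real m - real k > 0" using km by simp
      ultimately show ?thesis unfolding B_def using m by (simp add: divide_simps)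
    qed
    have "\<exists>x0. (real k - 1) / real m \<le> x0 \<and> x0 \<le> real k / real m \<and> 0 \<le> x0 \<and> P m k x0 = 0"
    proof (cases "k = 0")
      case True
      show ?thesis using True m by (intro exI[of _ 0]) (simp add: P_def)
    next
      case False
      have lo: "P m k ((real k - 1) / real m) \<ge> 0"
      proof (cases "k = 1")
        case True
        then show ?thesis using m by (simp add: P_def)
      next
        case False
        then have "P m k (real (k - 1) / real m) \<ge> 0" using valA[of "k-1" k m] \<open>k \<noteq> 0\<close> m by simp
        then show ?thesis using \<open>k \<noteq> 0\<close> by (simp add: of_nat_diff)
      qed
      have hi: "P m k (real k / real m) \<le> 0" using valB[of k m] False km by simp
      have le: "(real k - 1) / real m \<le> real k / real m" using m by (simp add: divide_simps)
      have lo0: "(real k - 1) / real m \<ge> 0" using False by simp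
      have cont: "continuous_on {(real k - 1) / real m .. real k / real m} (P m k)"
      proof (rule Pcont[OF m])
        show "{(real k - 1) / real m .. real k / real m} \<subseteq> {0..<real m / (2 * real m - real k)}"
          using hiB lo0 unfolding B_def by auto
      qed
      obtain x0 where "(real k - 1) / real m \<le> x0" "x0 \<le> real k / real m" "P m k x0 = 0"
        using IVT2'[OF hi lo le cont] by auto
      then show ?thesis using lo0 by (intro exI[of _ x0]) auto
    qed
    then obtain x0 where x0: "(real k - 1) / real m \<le> x0" "x0 \<le> real k / real m" "0 \<le> x0" "P m k x0 = 0"
      by blast
    have x0B: "x0 < B" using x0 hiB by linarith
    have B1: "B \<le> 1" using m unfolding B_def by (simp add: divide_simps)
    show ?thesis
    proof (intro exI[of _ x0] conjI allI impI)
      fix x assume x: "0 \<le> x \<and> x < x0"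
      have "(1 - x0) * P m k x0 < (1 - x) * P m k x"
        using Pmono[of m k x x0] m x x0B unfolding B_def by auto
      then have "(1 - x) * P m k x > 0" using x0 by simp
      moreover have "1 - x > 0" using x x0B B1 by linarith
      ultimately show "P m k x > 0" by (simp add: zero_less_mult_iff)
    next
      fix x assume x: "x0 < x \<and> x < B"
      have "(1 - x) * P m k x < (1 - x0) * P m k x0"
        using Pmono[of m k x0 x] m x x0 unfolding B_def by auto
      then have "(1 - x) * P m k x < 0" using x0 by simp
      moreover have "1 - x > 0" using x B1 by linarith
      ultimately show "P m k x < 0" by (simp add: mult_less_0_iff)
    qed (use x0 in auto)
  qed
  then show ?thesis unfolding rn rB ph B_def .
qed

end
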